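(* Let $\alpha\in\mathbb{R}$ not be a negative integer, let $n\in\mathbb{N}=\{1,2,\dots\}$ and $0\le i\le n-1$. Then on $(0,\infty)$ the function $$t\mapsto \sum_{k=0}^i\frac{(-1)^k}{(i-k)!}\,t^{i-k}\,\ell_{n-1-k}^{(\alpha+1+k)}(t)$$ is an antiderivative of $t\mapsto \frac{t^i}{i!}\ell_n^{(\alpha)}(t)$, i.e. $\int \frac{t^i}{i!}\ell_n^{(\alpha)}(t)\,dt=\sum_{k=0}^i\frac{(-1)^k}{(i-k)!}t^{i-k}\ell_{n-1-k}^{(\alpha+1+k)}(t)$.
   Context: The generalized Laguerre polynomials are $L_n^{(\alpha)}(t)=\sum_{k=0}^n(-1)^k\binom{n+\alpha}{n-k}\frac{t^k}{k!}$, and the Laguerre functions are $\ell_n^{(\alpha)}(t)=\frac{n!}{\Gamma(n+\alpha+1)}t^{\alpha}e^{-t}L_n^{(\alpha)}(t)$ for $t>0$ (defined for $\alpha\neq-1,-2,\dots$). *)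

theory Defs
  imports "HOL-Analysis.Analysis"
begin

definition laguerre :: "nat \<Rightarrow> real \<Rightarrow> real \<Rightarrow> real" where
  "laguerre n a t = (\<Sum>k=0..n. (-1)^k * ((real n + a) gchoose (n - k)) * t^k / fact k)"

definition laguerre_fun :: "nat \<Rightarrow> real \<Rightarrow> real \<Rightarrow> real" where
  "laguerre_fun n a t = fact n / Gamma (real n + a + 1) * t powr a * exp (- t) * laguerre n a t"

end

theory Submission
  imports Defs
begin

lemma coefA:
  fixes \<beta> :: real and m j :: nat
  assumes "1 \<le> j" "j \<le> m"
  shows "(real m + 1) * ((-1)^j * ((real m + \<beta> + 1) gchoose (Suc m - j)) / fact j)
       = (\<beta> + 1 + real j) * ((-1)^j * ((real m + \<beta> + 1) gchoose (m - j)) / fact j)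
         - (-1)^(j-1) * ((real m + \<beta> + 1) gchoose (m - (j - 1))) / fact (j - 1)"
proof -
  obtain r where m: "m = j + r" using assms by (metis le_add_diff_inverse)
  obtain j' where j: "j = Suc j'" using assms by (cases j) auto
  define x where "x = real m + \<beta> + 1"
  have e1: "Suc m - j = Suc r" "m - (j - 1) = Suc r" "m - j = r" using m j by auto
  have g: "x * (x gchoose r) = real r * (x gchoose r) + real (Suc r) * (x gchoose Suc r)"
    by (rule gbinomial_mult_1)
  have xr: "x - real r = \<beta> + 1 + real j" using m unfolding x_def by simp
  have g2: "real (Suc r) * (x gchoose Suc r) = (\<beta> + 1 + real j) * (x gchoose r)"
    using g xr by (simp add: algebra_simps)
  have key: "(real m + 1) * (x gchoose Suc r) = (\<beta> + 1 + real j) * (x gchoose r) + real j * (x gchoose Suc r)"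
    using g2 m by (simp add: algebra_simps)
  have fj: "(-1::real)^(j-1) / fact (j-1) = - ((-1)^j / fact j * real j)"
  proof -
    have p: "(0::real) < fact j'" by simp
    have "(-1::real)^j / fact j * real j = (-1)^j / fact j'"
      unfolding j fact_Suc using p by (simp add: divide_simps)
    then show ?thesis using j by simp
  qed
  have "(\<beta> + 1 + real j) * ((-1)^j * (x gchoose r) / fact j) - (-1)^(j-1) * (x gchoose Suc r) / fact (j - 1)
      = (-1)^j / fact j * ((\<beta> + 1 + real j) * (x gchoose r) + real j * (x gchoose Suc r))"
  proof -
    have "(-1)^(j-1) * (x gchoose Suc r) / fact (j - 1) = (x gchoose Suc r) * ((-1::real)^(j-1) / fact (j-1))"
      by simp
    also have "\<dots> = - ((-1)^j / fact j * (real j * (x gchoose Suc r)))" unfolding fj by simp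
    finally show ?thesis by (simp add: algebra_simps add_divide_distrib)
  qed
  also have "\<dots> = (real m + 1) * ((-1)^j * (x gchoose Suc r) / fact j)"
    using key by simp
  finally show ?thesis unfolding e1 x_def[symmetric] by simp
qed

lemma poly_id:
  fixes \<beta> t :: real and m :: nat
  shows "(\<beta>+1) * laguerre m (\<beta>+1) t - t * laguerre m (\<beta>+1) t
     + (\<Sum>j=0..m. (-1)^j * ((real m + (\<beta>+1)) gchoose (m-j)) * (real j * t^j) / fact j)
     = (real m + 1) * laguerre (Suc m) \<beta> t"
proof -
  define X where "X = real m + \<beta> + 1"
  define a where "a j = (-1)^j * (X gchoose (m-j)) / fact j" for j
  define a' where "a' j = (if j \<le> m then a j else 0)" for j
  define b where "b j = (-1)^j * (X gchoose (Suc m - j)) / fact j" for j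
  have L1: "laguerre m (\<beta>+1) t = (\<Sum>j=0..m. a j * t^j)"
    unfolding laguerre_def a_def X_def by (simp add: algebra_simps)
  have L2: "laguerre (Suc m) \<beta> t = (\<Sum>j=0..Suc m. b j * t^j)"
    unfolding laguerre_def b_def X_def by (simp add: algebra_simps)
  have L3: "(\<Sum>j=0..m. (-1)^j * ((real m + (\<beta>+1)) gchoose (m-j)) * (real j * t^j) / fact j)
       = (\<Sum>j=0..m. real j * a j * t^j)"
    unfolding a_def X_def by (simp add: algebra_simps)
  have S1: "(\<Sum>j=0..m. (\<beta>+1+real j) * a j * t^j) = (\<Sum>j=0..Suc m. (\<beta>+1+real j) * a' j * t^j)"
    by (simp add: a'_def)
  have S2: "(\<Sum>j=0..m. a j * t^(Suc j)) = (\<Sum>j=Suc 0..Suc m. a (j-1) * t^j)"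
    by (simp only: sum.shift_bounds_cl_Suc_ivl) (simp add: o_def)
  have pt: "(real m + 1) * (b j * t^j) = (\<beta>+1+real j) * a' j * t^j - a (j-1) * t^j"
    if j: "j \<in> {Suc 0..Suc m}" for j
  proof (cases "j \<le> m")
    case True
    then have "(real m + 1) * b j = (\<beta>+1+real j) * a' j - a (j-1)"
      using coefA[of j m \<beta>] j unfolding a'_def a_def b_def X_def by simp
    then have "(real m + 1) * b j * t^j = ((\<beta>+1+real j) * a' j - a (j-1)) * t^j" by simp
    then show ?thesis by (simp add: algebra_simps)
  next
    case False
    then have jm: "j = Suc m" using j by simp
    have "(real m + 1) * b j = - a (j-1)"
      unfolding jm a_def b_def by (simp add: fact_Suc divide_simps)
    then have "(real m + 1) * b j * t^j = (- a (j-1)) * t^j" by simp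
    then show ?thesis using False by (simp add: a'_def algebra_simps)
  qed
  have p0: "(real m + 1) * b 0 = (\<beta>+1) * a' 0"
  proof -
    have g: "X * (X gchoose m) = real m * (X gchoose m) + real (Suc m) * (X gchoose Suc m)"
      by (rule gbinomial_mult_1)
    then show ?thesis unfolding a'_def a_def b_def X_def by (simp add: algebra_simps)
  qed
  have "(real m + 1) * laguerre (Suc m) \<beta> t = (\<Sum>j=0..Suc m. (real m + 1) * (b j * t^j))"
    unfolding L2 by (simp only: sum_distrib_left)
  also have "\<dots> = (real m + 1) * b 0 + (\<Sum>j=Suc 0..Suc m. (real m + 1) * (b j * t^j))"
    by (subst sum.atLeast_Suc_atMost) simp_all
  also have "\<dots> = (\<beta>+1) * a' 0 + (\<Sum>j=Suc 0..Suc m. (\<beta>+1+real j) * a' j * t^j - a (j-1) * t^j)"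
    by (simp only: p0 sum.cong[OF refl pt])
  also have "\<dots> = (\<Sum>j=0..Suc m. (\<beta>+1+real j) * a' j * t^j) - (\<Sum>j=Suc 0..Suc m. a (j-1) * t^j)"
    by (subst (2) sum.atLeast_Suc_atMost) (simp_all add: sum_subtractf)
  also have "\<dots> = (\<Sum>j=0..m. (\<beta>+1+real j) * a j * t^j) - (\<Sum>j=0..m. a j * t^(Suc j))"
    using S1 S2 by simp
  also have "\<dots> = (\<beta>+1) * laguerre m (\<beta>+1) t - t * laguerre m (\<beta>+1) t
     + (\<Sum>j=0..m. (-1)^j * ((real m + (\<beta>+1)) gchoose (m-j)) * (real j * t^j) / fact j)"
    unfolding L1 L3 by (simp add: sum_distrib_left algebra_simps sum.distrib sum_subtractf)
  finally show ?thesis by simp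
qed

lemma lag_deriv:
  fixes \<beta> t :: real and m :: nat
  assumes t: "t > 0"
  shows "(laguerre_fun m (\<beta>+1) has_real_derivative laguerre_fun (Suc m) \<beta> t) (at t)"
proof -
  define D where "D = (\<Sum>j=0..m. (-1)^j * ((real m + (\<beta>+1)) gchoose (m-j)) * (real j * t^(j-1)) / fact j)"
  have dP: "(laguerre m (\<beta>+1) has_real_derivative D) (at t)"
    unfolding laguerre_def[abs_def] D_def
    by (rule derivative_eq_intros refl | simp)+ (simp add: algebra_simps)
  have tD: "t * D = (\<Sum>j=0..m. (-1)^j * ((real m + (\<beta>+1)) gchoose (m-j)) * (real j * t^j) / fact j)"
    unfolding D_def sum_distrib_left
  proof (rule sum.cong[OF refl])
    fix j assume "j \<in> {0..m}"
    show "t * ((-1)^j * ((real m + (\<beta>+1)) gchoose (m-j)) * (real j * t^(j-1)) / fact j)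
        = (-1)^j * ((real m + (\<beta>+1)) gchoose (m-j)) * (real j * t^j) / fact j"
      by (cases j) (simp_all add: algebra_simps)
  qed
  define c where "c = fact m / Gamma (real m + (\<beta>+1) + 1)"
  define P where "P = laguerre m (\<beta>+1) t"
  have lf: "laguerre_fun m (\<beta>+1) = (\<lambda>s. c * s powr (\<beta>+1) * exp (-s) * laguerre m (\<beta>+1) s)"
    unfolding laguerre_fun_def[abs_def] c_def by simp
  have d1: "(laguerre_fun m (\<beta>+1) has_real_derivative
     c * ((\<beta>+1) * t powr \<beta> * exp (-t) * P - t powr (\<beta>+1) * exp (-t) * P + t powr (\<beta>+1) * exp(-t) * D)) (at t)"
  proof -
    have h1: "((\<lambda>s. s powr (\<beta>+1)) has_real_derivative (\<beta>+1) * t powr \<beta>) (at t)"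
      using has_real_derivative_powr[OF t, of "\<beta>+1"] by simp
    have h2: "((\<lambda>s. exp (-s)) has_real_derivative - exp (-t)) (at t)"
      by (rule derivative_eq_intros refl)+ simp
    have h3: "((\<lambda>s. s powr (\<beta>+1) * exp (-s)) has_real_derivative
        (\<beta>+1) * t powr \<beta> * exp (-t) + (- exp (-t)) * t powr (\<beta>+1)) (at t)"
      by (rule DERIV_mult[OF h1 h2])
    have h4: "((\<lambda>s. s powr (\<beta>+1) * exp (-s) * laguerre m (\<beta>+1) s) has_real_derivative
        ((\<beta>+1) * t powr \<beta> * exp (-t) + (- exp (-t)) * t powr (\<beta>+1)) * P + D * (t powr (\<beta>+1) * exp (-t))) (at t)"
      unfolding P_def by (rule DERIV_mult[OF h3 dP])
    note h5 = DERIV_cmult[OF h4, of c]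
    show ?thesis unfolding lf
      by (rule DERIV_cong[OF h5[unfolded mult.assoc[symmetric]]]) (simp add: algebra_simps)
  qed
  have pw: "t powr (\<beta>+1) = t powr \<beta> * t" using t by (simp add: powr_add)
  have "c * ((\<beta>+1) * t powr \<beta> * exp (-t) * P - t powr (\<beta>+1) * exp (-t) * P + t powr (\<beta>+1) * exp(-t) * D)
      = c * t powr \<beta> * exp (-t) * ((\<beta>+1) * P - t * P + t * D)"
    unfolding pw by (simp add: algebra_simps)
  also have "\<dots> = c * t powr \<beta> * exp (-t) * ((real m + 1) * laguerre (Suc m) \<beta> t)"
    unfolding tD P_def poly_id ..
  also have "\<dots> = laguerre_fun (Suc m) \<beta> t"
    unfolding laguerre_fun_def c_def by (simp add: fact_Suc algebra_simps)
  finally show ?thesis using d1 by simp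
qed

theorem lemma2p2:
  fixes \<alpha> :: real and n i :: nat
  assumes "\<forall>m::nat. \<alpha> \<noteq> - real (Suc m)"
    and "n \<ge> 1" and "i \<le> n - 1"
  shows "\<forall>t>0. ((\<lambda>s. \<Sum>k=0..i. (-1)^k / fact (i - k) * s^(i - k)
                         * laguerre_fun (n - 1 - k) (\<alpha> + 1 + real k) s)
           has_real_derivative (t^i / fact i * laguerre_fun n \<alpha> t)) (at t)"
proof (intro allI impI)
  fix t :: real assume t: "t > 0"
  define T where "T k = (-1)^k / fact (i - k) * t^(i - k) * laguerre_fun (n - k) (\<alpha> + real k) t" for k
  define U where "U k = (if k < i then T (Suc k) else 0)" for k
  have dk: "((\<lambda>s. (-1)^k / fact (i - k) * s^(i - k) * laguerre_fun (n - 1 - k) (\<alpha> + 1 + real k) s)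
      has_real_derivative (T k - U k)) (at t)" if k: "k \<in> {0..i}" for k
  proof -
    have ki: "k \<le> i" using k by simp
    have e1: "\<alpha> + 1 + real k = (\<alpha> + real k) + 1" by simp
    have e2: "Suc (n - 1 - k) = n - k" using ki assms(2,3) by simp
    have dl: "(laguerre_fun (n - 1 - k) (\<alpha> + 1 + real k) has_real_derivative laguerre_fun (n - k) (\<alpha> + real k) t) (at t)"
      using lag_deriv[OF t, of "n - 1 - k" "\<alpha> + real k"] unfolding e1 e2 .
    have d: "((\<lambda>s. (-1)^k / fact (i - k) * s^(i - k) * laguerre_fun (n - 1 - k) (\<alpha> + 1 + real k) s)
      has_real_derivative (-1)^k / fact (i - k) * (real (i - k) * t^(i - k - 1) * laguerre_fun (n - 1 - k) (\<alpha> + 1 + real k) t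
         + t^(i - k) * laguerre_fun (n - k) (\<alpha> + real k) t)) (at t)"
      by (rule derivative_eq_intros refl dl | simp)+ (simp add: algebra_simps add_divide_distrib)
    show ?thesis
    proof (rule DERIV_cong[OF d])
      show "(-1)^k / fact (i - k) * (real (i - k) * t^(i - k - 1) * laguerre_fun (n - 1 - k) (\<alpha> + 1 + real k) t
         + t^(i - k) * laguerre_fun (n - k) (\<alpha> + real k) t) = T k - U k"
      proof (cases "k < i")
        case False
        then have "k = i" using ki by simp
        then show ?thesis unfolding T_def U_def by simp
      next
        case True
        obtain r where r: "i - k = Suc r" using True by (metis Suc_diff_Suc)
        have r2: "i - Suc k = r" using r by simp
        have e3: "n - Suc k = n - 1 - k" by simp
        have e4: "\<alpha> + real (Suc k) = \<alpha> + 1 + real k" by simp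
        have cf: "(-1)^k / fact (i - k) * (real (i - k) * t^(i - k - 1)) = - ((-1)^(Suc k) / fact (i - Suc k) * t^(i - Suc k))"
          unfolding r r2 by (simp add: fact_Suc divide_simps)
        then have "(-1)^k / fact (i - k) * (real (i - k) * t^(i - k - 1) * laguerre_fun (n - 1 - k) (\<alpha> + 1 + real k) t)
            = - U k"
        proof -
          have "(-1)^k / fact (i - k) * (real (i - k) * t^(i - k - 1) * laguerre_fun (n - 1 - k) (\<alpha> + 1 + real k) t)
             = ((-1)^k / fact (i - k) * (real (i - k) * t^(i - k - 1))) * laguerre_fun (n - 1 - k) (\<alpha> + 1 + real k) t"
            by (simp only: mult.assoc)
          also have "\<dots> = - ((-1)^(Suc k) / fact (i - Suc k) * t^(i - Suc k) * laguerre_fun (n - Suc k) (\<alpha> + real (Suc k)) t)"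
            unfolding cf e3 e4 by simp
          finally show ?thesis unfolding U_def T_def using True by simp
        qed
        then show ?thesis unfolding T_def by (simp add: algebra_simps)
      qed
    qed
  qed
  have ds: "((\<lambda>s. \<Sum>k=0..i. (-1)^k / fact (i - k) * s^(i - k)
                         * laguerre_fun (n - 1 - k) (\<alpha> + 1 + real k) s)
           has_real_derivative (\<Sum>k=0..i. T k - U k)) (at t)"
    by (rule DERIV_sum) (rule dk)
  have "(\<Sum>k=0..i. T k - U k) = (\<Sum>k<Suc i. T k - U k)"
    by (simp add: atLeast0AtMost lessThan_Suc_atMost)
  also have "\<dots> = (\<Sum>k<i. T k - T (Suc k)) + T i"
    by (simp add: U_def)
  also have "\<dots> = T 0"
    by (simp add: sum_lessThan_telescope')
  also have "\<dots> = t^i / fact i * laguerre_fun n \<alpha> t"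
    unfolding T_def by simp
  finally show "((\<lambda>s. \<Sum>k=0..i. (-1)^k / fact (i - k) * s^(i - k)
                         * laguerre_fun (n - 1 - k) (\<alpha> + 1 + real k) s)
           has_real_derivative (t^i / fact i * laguerre_fun n \<alpha> t)) (at t)"
    using ds by simp
qed

end
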